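(* Consider the algorithm in the context at epoch $t$ with batch size $B_t$. Suppose $\delta\in(0,1)$ and $B_t$ satisfy (i) $\mathrm{e}^{\frac{\delta B_t}{2(1-2\delta)}}\le\frac{2K}{\delta}\le\mathrm{e}^{\frac{B_t}{2}}$ and (ii) $\delta\le\frac{1}{25KB_t}$. Let $e_t=\mu_t-\nabla f(\tilde{x}_{t-1})$ and $C=2\log(2K/\delta)$. Then $$\mathbb{E}\|e_t\|^2\le\frac{4\mathcal{V}^2}{(1-\alpha)^2KB_t}+\frac{272\,\alpha^2\mathcal{V}^2C}{(1-\alpha)^2B_t}.$$
   Context: Setting: $f(x)=\mathbb{E}_{\xi\sim\mathcal{D}}f(x;\xi)$ with $\|\nabla f(x;\xi)-\nabla f(x)\|\le\mathcal{V}$ for all $x$ and all $\xi\sim\mathcal{D}$. There are $K$ worker nodes (WNs), of which the honest set $\mathcal{G}$ satisfies $|\mathcal{G}|\ge(1-\alpha)K$, $\alpha\in[0,1/2)$; the others are Byzantine. At epoch $t$, with current point $\tilde{x}_{t-1}$, each honest WN $k\in\mathcal{G}$ sends $\mu_t^{(k)}=\frac{1}{B_t}\sum_{i=1}^{B_t}\nabla f(\tilde{x}_{t-1};\xi_{t,i}^{(k)})$ with $\xi_{t,i}^{(k)}$ i.i.d. from $\mathcal{D}$ (independent across $i,k$), and each Byzantine WN sends an arbitrary vector. Filtering: with $\mathfrak{T}_\mu=2\mathcal{V}\sqrt{C/B_t}$, Rule 1 sets $\mu_t^{\mathrm{med}}=\mu_t^{(k)}$ for any $k$ with $|\{k':\|\mu_t^{(k')}-\mu_t^{(k)}\|\le\mathfrak{T}_\mu\}|>K/2$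 and $\mathcal{G}_t=\{k:\|\mu_t^{(k)}-\mu_t^{\mathrm{med}}\|\le2\mathfrak{T}_\mu\}$; if this gives $|\mathcal{G}_t|<(1-\alpha)K$, Rule 2 sets $\mu_t^{\mathrm{med}}=\mu_t^{(k)}$ for any $k$ with $|\{k':\|\mu_t^{(k')}-\mu_t^{(k)}\|\le2\mathcal{V}\}|>K/2$ and $\mathcal{G}_t=\{k:\|\mu_t^{(k)}-\mu_t^{\mathrm{med}}\|\le4\mathcal{V}\}$. Finally $\mu_t=\frac{1}{|\mathcal{G}_t|}\sum_{k\in\mathcal{G}_t}\mu_t^{(k)}$. *)

theory Defs
  imports "HOL-Probability.Probability"
begin

definition near_set :: "nat \<Rightarrow> real \<Rightarrow> (nat \<Rightarrow> 'a::real_normed_vector) \<Rightarrow> nat \<Rightarrow> nat set" where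
  "near_set K r m k = {k'. k' < K \<and> norm (m k' - m k) \<le> r}"

definition med_cand :: "nat \<Rightarrow> real \<Rightarrow> (nat \<Rightarrow> 'a::real_normed_vector) \<Rightarrow> nat \<Rightarrow> bool" where
  "med_cand K r m k \<longleftrightarrow> k < K \<and> real (card (near_set K r m k)) > real K / 2"

definition avg_over :: "nat set \<Rightarrow> (nat \<Rightarrow> 'a::real_normed_vector) \<Rightarrow> 'a" where
  "avg_over S m = (1 / real (card S)) *\<^sub>R (\<Sum>k\<in>S. m k)"

text \<open>v is a possible output mu_t of the two-rule filtering procedure applied to the messages m
  of K nodes, with threshold T (= T_mu), fraction alpha and variance bound V.  The choice of the
  index k ("any k") is nondeterministic; Rule 2 is used whenever Rule 1 yields a set that is
  too small or Rule 1 finds no candidate.\<close>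
definition filter_output ::
  "nat \<Rightarrow> real \<Rightarrow> real \<Rightarrow> real \<Rightarrow> (nat \<Rightarrow> 'a::real_normed_vector) \<Rightarrow> 'a \<Rightarrow> bool" where
  "filter_output K \<alpha> V T m v \<longleftrightarrow>
     (\<exists>k. med_cand K T m k \<and> real (card (near_set K (2*T) m k)) \<ge> (1 - \<alpha>) * real K
          \<and> v = avg_over (near_set K (2*T) m k) m)
   \<or> (((\<exists>k. med_cand K T m k \<and> real (card (near_set K (2*T) m k)) < (1 - \<alpha>) * real K)
         \<or> \<not> (\<exists>k. med_cand K T m k))
      \<and> (\<exists>k. med_cand K (2*V) m k \<and> v = avg_over (near_set K (4*V) m k) m))"

end

theory Submission
  imports Defs
begin

lemma fact_double_ge_nat: "2 ^ m * fact m \<le> (fact (2*m) :: nat)"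
proof (induction m)
  case 0 then show ?case by simp
next
  case (Suc m)
  have "2 ^ Suc m * fact (Suc m) = (2*m+2) * (2 ^ m * fact m)" by (simp add: algebra_simps)
  also have "\<dots> \<le> (2*m+2) * fact (2*m)"
    using Suc by (rule mult_le_mono2)
  also have "\<dots> \<le> (2*m+2) * ((2*m+1) * fact (2*m))"
    by (intro mult_le_mono2) simp
  also have "(2*m+2) * ((2*m+1) * fact (2*m)) = fact (2 * Suc m)"
    by (simp add: fact_Suc)
  finally show ?case .
qed

lemma cosh_le_exp_sq: "cosh (y::real) \<le> exp (y^2/2)"
proof -
  define z where "z = y^2/2"
  have e0: "(\<lambda>n. if even n then (\<lambda>k. z^k /\<^sub>R fact k) (n div 2) else (\<lambda>k. 0) ((n - 1) div 2)) sums (0 + exp z)"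
    by (rule sums_if[OF sums_zero exp_converges])
  have e: "(\<lambda>n. if even n then z^(n div 2) / fact (n div 2) else 0) sums exp z"
    using e0 by (simp only: add_0_left real_scaleR_def divide_inverse mult.commute)
  have c: "(\<lambda>n. if even n then y ^ n /\<^sub>R fact n else 0) sums cosh y"
    by (rule cosh_converges)
  show ?thesis unfolding z_def[symmetric]
  proof (rule sums_le[OF _ c e])
    fix n
    show "(if even n then y ^ n /\<^sub>R fact n else 0) \<le> (if even n then z^(n div 2) / fact (n div 2) else 0)"
    proof (cases "even n")
      case True
      then obtain m where n: "n = 2*m" by blast
      have y: "y ^ n = (y^2)^m" by (simp only: n power_mult)
      have f: "(2::real)^m * fact m \<le> fact n"
        using fact_double_ge_nat[of m, THEN of_nat_mono[where 'a=real]] unfolding n by simp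
      have "y^n / fact n \<le> (y^2)^m / (2^m * fact m)"
        unfolding y by (rule divide_left_mono[OF f]) auto
      also have "\<dots> = z^m / fact m" by (simp add: z_def power_divide)
      finally show ?thesis using True n by (simp add: real_scaleR_def divide_inverse mult.commute)
    qed simp
  qed
qed

lemma cosh_sqrt_convex:
  fixes u1 u2 t :: real
  assumes "0 \<le> u1" "0 \<le> u2" "0 \<le> t" "t \<le> 1"
  shows "cosh (sqrt (t*u1 + (1-t)*u2)) \<le> t * cosh (sqrt u1) + (1-t) * cosh (sqrt u2)"
proof -
  define F where "F s n = (if even n then s ^ (n div 2) / fact n else (0::real))" for s n
  have F: "F s sums cosh (sqrt s)" if "0 \<le> s" for s
  proof -
    have "sqrt s ^ n = s ^ (n div 2)" if en: "even n" for n
    proof -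
      obtain m where m: "n = 2*m" using en by blast
      have "sqrt s ^ n = (sqrt s ^ 2) ^ m" by (simp only: m power_mult)
      also have "\<dots> = s ^ m" using \<open>0 \<le> s\<close> by simp
      finally show ?thesis by (simp add: m)
    qed
    then have "F s = (\<lambda>n. if even n then sqrt s ^ n /\<^sub>R fact n else 0)"
      by (auto simp: F_def fun_eq_iff divide_inverse mult.commute)
    then show ?thesis using cosh_converges[of "sqrt s"] by simp
  qed
  have s: "0 \<le> t*u1 + (1-t)*u2" using assms by simp
  have cv: "convex_on {0..} (\<lambda>x::real. x ^ m)" for m
    by (cases "even m") (auto intro: convex_power_odd convex_on_subset[OF convex_power_even])
  show ?thesis
  proof (rule sums_le[OF _ F[OF s] sums_add[OF sums_mult[OF F[OF assms(1)]] sums_mult[OF F[OF assms(2)]]]])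
    fix n
    show "F (t * u1 + (1 - t) * u2) n \<le> t * F u1 n + (1 - t) * F u2 n"
    proof (cases "even n")
      case True
      have "((1 - t) * u2 + t * u1) ^ (n div 2) \<le> (1-t) * u2 ^ (n div 2) + t * u1 ^ (n div 2)"
        using convex_onD[OF cv[of "n div 2"], of t u2 u1] assms by auto
      then have "(t * u1 + (1 - t) * u2) ^ (n div 2) \<le> t * u1 ^ (n div 2) + (1-t) * u2 ^ (n div 2)"
        by (simp only: add.commute)
      then have "(t * u1 + (1 - t) * u2) ^ (n div 2) / fact n \<le> (t * u1 ^ (n div 2) + (1-t) * u2 ^ (n div 2)) / fact n"
        by (intro divide_right_mono) auto
      then show ?thesis using True unfolding F_def by (simp add: add_divide_distrib)
    qed (simp add: F_def)
  qed
qed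

lemma cosh_chord:
  fixes a c p l :: real
  assumes a: "0 \<le> a" and c: "0 < c" and p: "\<bar>p\<bar> \<le> a*c" and l: "0 \<le> l"
  shows "cosh (l * sqrt (a^2+c^2+2*p)) \<le> cosh (l*a) * cosh (l*c) + (if a = 0 then 0 else sinh (l*a) * sinh (l*c) / (a*c)) * p"
proof (cases "a = 0")
  case True
  then have "p = 0" using p by simp
  then show ?thesis using True c l by (simp add: real_sqrt_abs[of c, unfolded power2_eq_square] power2_eq_square)
next
  case False
  then have ac: "0 < a*c" using a c by simp
  define t where "t = (a*c - p)/(2*a*c)"
  have t0: "0 \<le> t" using p ac by (auto simp: t_def)
  have t1: "t \<le> 1" using p ac by (auto simp: t_def field_simps)
  define u1 where "u1 = (l*(a-c))^2"
  define u2 where "u2 = (l*(a+c))^2"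
  have c0: "t*u1 + (1-t)*u2 = u2 - t*(u2-u1)" by (simp add: algebra_simps)
  have c1: "u2 - u1 = 4*l^2*(a*c)" unfolding u1_def u2_def by (simp add: power2_eq_square algebra_simps)
  have t2: "t*(2*(a*c)) = a*c-p" using False c unfolding t_def by simp
  have c2: "t*(4*l^2*(a*c)) = 2*l^2*(a*c-p)"
  proof -
    have "t*(4*l^2*(a*c)) = 2*l^2*(t*(2*(a*c)))" by (simp add: algebra_simps)
    then show ?thesis unfolding t2 .
  qed
  have comb: "t*u1 + (1-t)*u2 = l^2 * (a^2+c^2+2*p)"
    unfolding c0 c1 c2 unfolding u2_def by (simp add: power2_eq_square algebra_simps)
  have nn: "0 \<le> a^2+c^2+2*p"
  proof -
    have "a^2+c^2-2*(a*c) = (a-c)^2" by (simp add: power2_eq_square algebra_simps)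
    then have "a^2+c^2-2*(a*c) \<ge> 0" by simp
    then show ?thesis using p by linarith
  qed
  have sq: "sqrt (t*u1 + (1-t)*u2) = l * sqrt (a^2+c^2+2*p)"
    unfolding comb using l by (simp add: real_sqrt_mult)
  have c1: "cosh (sqrt u1) = cosh (l*a) * cosh (l*c) - sinh (l*a) * sinh (l*c)"
  proof -
    have "cosh (sqrt u1) = cosh (l*a - l*c)"
      unfolding u1_def by (simp add: right_diff_distrib cosh_real_abs)
    then show ?thesis by (simp add: cosh_diff)
  qed
  have c2: "cosh (sqrt u2) = cosh (l*a) * cosh (l*c) + sinh (l*a) * sinh (l*c)"
  proof -
    have "cosh (sqrt u2) = cosh (l*a + l*c)"
      unfolding u2_def by (simp add: distrib_left cosh_real_abs)
    then show ?thesis by (simp add: cosh_add)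
  qed
  have "cosh (l * sqrt (a^2+c^2+2*p)) \<le> t * cosh (sqrt u1) + (1-t) * cosh (sqrt u2)"
    unfolding sq[symmetric] by (rule cosh_sqrt_convex) (auto simp: u1_def u2_def t0 t1)
  also have "\<dots> = cosh (l*a) * cosh (l*c) + (1 - 2*t) * (sinh (l*a) * sinh (l*c))"
    unfolding c1 c2 by (simp add: algebra_simps)
  also have "1 - 2*t = p/(a*c)"
  proof -
    have "(1-2*t)*(a*c) = p" using t2 by (simp add: algebra_simps)
    then show ?thesis using False c by (simp add: eq_divide_eq)
  qed
  finally show ?thesis using False by (simp add: mult.commute)
qed

lemma cosh_norm_bound:
  fixes x d :: "'a::real_inner"
  assumes d: "norm d \<le> c" and c: "0 < c" and l: "0 \<le> l"
  shows "cosh (l * norm (x + d)) \<le> cosh (l * norm x) * cosh (l*c)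
     + (if norm x = 0 then 0 else sinh (l * norm x) * sinh (l*c) / (norm x * c)) * (x \<bullet> d)"
proof -
  have e: "(norm (x+d))^2 = (norm x)^2 + (norm d)^2 + 2 * (x \<bullet> d)"
    by (simp add: power2_norm_eq_inner inner_add algebra_simps inner_commute)
  have cs: "\<bar>x \<bullet> d\<bar> \<le> norm x * c"
    using Cauchy_Schwarz_ineq2[of x d] d norm_ge_zero[of x]
    by (meson mult_left_mono order_trans)
  have "norm (x+d) = sqrt ((norm x)^2 + (norm d)^2 + 2 * (x \<bullet> d))"
    by (simp add: e[symmetric])
  also have "\<dots> \<le> sqrt ((norm x)^2 + c^2 + 2 * (x \<bullet> d))"
    using d by (intro real_sqrt_le_mono add_mono power_mono) auto
  finally have "l * norm (x+d) \<le> l * sqrt ((norm x)^2 + c^2 + 2 * (x \<bullet> d))"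
    using l by (rule mult_left_mono)
  then have "cosh (l * norm (x+d)) \<le> cosh (l * sqrt ((norm x)^2 + c^2 + 2 * (x \<bullet> d)))"
  proof -
    have "(norm d)^2 \<le> c^2" using d by (intro power_mono) auto
    then have "0 \<le> (norm x)^2 + c^2 + 2 * (x \<bullet> d)" using e zero_le_power2[of "norm (x+d)"] by linarith
    then show ?thesis using l \<open>l * norm (x+d) \<le> _\<close> by (subst cosh_real_nonneg_le_iff) auto
  qed
  also have "\<dots> \<le> cosh (l * norm x) * cosh (l*c)
     + (if norm x = 0 then 0 else sinh (l * norm x) * sinh (l*c) / (norm x * c)) * (x \<bullet> d)"
    by (rule cosh_chord[OF norm_ge_zero c cs l])
  finally show ?thesis .
qed

lemma sum_comp_measurable:
  fixes Y :: "'b \<Rightarrow> 'a::euclidean_space"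
  assumes Ym: "Y \<in> borel_measurable D" and J: "J \<subseteq> I"
  shows "(\<lambda>w. \<Sum>p\<in>J. Y (w p)) \<in> borel_measurable (PiM I (\<lambda>_. D))"
proof (rule borel_measurable_sum)
  fix p assume "p \<in> J"
  then have "p \<in> I" using J by auto
  then show "(\<lambda>w. Y (w p)) \<in> borel_measurable (PiM I (\<lambda>_. D))"
    using measurable_comp[OF measurable_component_singleton[of p I "\<lambda>_. D"] Ym] by (simp add: comp_def)
qed

lemma iter_bound:
  fixes D :: "'b measure" and Y :: "'b \<Rightarrow> 'a::euclidean_space" and \<Phi> :: "'a \<Rightarrow> real"
    and I :: "'i set"
  assumes D: "prob_space D" and Ym: "Y \<in> borel_measurable D"
    and \<Phi>m: "\<Phi> \<in> borel_measurable borel"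
    and \<Phi>0: "\<And>z. 0 \<le> \<Phi> z" and a: "1 \<le> a" and b: "0 \<le> b"
    and step: "\<And>z. (\<integral>\<^sup>+y. ennreal (\<Phi> (z + Y y)) \<partial>D) \<le> ennreal (a * \<Phi> z + b)"
    and I: "finite I"
  shows "J \<subseteq> I \<Longrightarrow> (\<integral>\<^sup>+w. ennreal (\<Phi> (z + (\<Sum>p\<in>J. Y (w p)))) \<partial>PiM I (\<lambda>_. D))
           \<le> ennreal (a ^ card J * \<Phi> z + real (card J) * b * a ^ card J)"
  using I
proof (induction I arbitrary: J z rule: finite_induct)
  case empty
  then have J: "J = {}" by auto
  interpret P: prob_space "PiM {} (\<lambda>_. D)" by (rule prob_space_PiM) (use D in auto)
  show ?case using J by (simp add: P.emeasure_space_1)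
next
  case (insert i I)
  interpret PP: product_prob_space "\<lambda>_. D" by (rule product_prob_spaceI) (rule D)
  interpret P: prob_space "PiM I (\<lambda>_. D)" by (rule prob_space_PiM) (use D in auto)
  interpret DD: prob_space D by (rule D)
  have hm: "(\<lambda>x. ennreal (\<Phi> (z + x))) \<in> borel_measurable borel" for z
    using \<Phi>m by measurable
  have fm: "(\<lambda>w. ennreal (\<Phi> (z + (\<Sum>p\<in>J. Y (w p))))) \<in> borel_measurable (PiM (insert i I) (\<lambda>_. D))"
    using measurable_comp[OF sum_comp_measurable[OF Ym insert.prems] hm]
    by (auto simp: comp_def)
  have eq: "(\<integral>\<^sup>+w. ennreal (\<Phi> (z + (\<Sum>p\<in>J. Y (w p)))) \<partial>PiM (insert i I) (\<lambda>_. D))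
     = (\<integral>\<^sup>+w. (\<integral>\<^sup>+y. ennreal (\<Phi> (z + (\<Sum>p\<in>J. Y ((w(i:=y)) p)))) \<partial>D) \<partial>PiM I (\<lambda>_. D))"
    by (rule PP.product_nn_integral_insert[OF insert.hyps(1,2) fm])
  show ?case
  proof (cases "i \<in> J")
    case True
    define J' where "J' = J - {i}"
    have J': "J' \<subseteq> I" using insert.prems insert.hyps unfolding J'_def by auto
    have fin: "finite J" using insert.prems insert.hyps finite_subset by blast
    have cJ: "card J = Suc (card J')" unfolding J'_def using card.remove[OF fin True] .
    define S where "S w = (\<Sum>p\<in>J'. Y (w p))" for w :: "'i \<Rightarrow> 'b"
    have Sm: "S \<in> borel_measurable (PiM I (\<lambda>_. D))" unfolding S_def by (rule sum_comp_measurable[OF Ym J'])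
    have sp: "(\<Sum>p\<in>J. Y ((w(i:=y)) p)) = Y y + S w" for w y
    proof -
      have "(\<Sum>p\<in>J. Y ((w(i:=y)) p)) = Y y + (\<Sum>p\<in>J'. Y ((w(i:=y)) p))"
        using True fin unfolding J'_def by (simp add: sum.remove)
      also have "(\<Sum>p\<in>J'. Y ((w(i:=y)) p)) = S w" unfolding S_def J'_def by (intro sum.cong) auto
      finally show ?thesis .
    qed
    have inner: "(\<integral>\<^sup>+y. ennreal (\<Phi> (z + (\<Sum>p\<in>J. Y ((w(i:=y)) p)))) \<partial>D) \<le> ennreal (a * \<Phi> (z + S w) + b)" for w
      unfolding sp using step[of "z + S w"] by (simp add: add.assoc add.commute add.left_commute)
    have eqe: "ennreal (a * \<Phi> u + b) = ennreal a * ennreal (\<Phi> u) + ennreal b" for u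
      using a b \<Phi>0[of u] by (simp add: ennreal_mult)
    have gm: "(\<lambda>w. ennreal (\<Phi> (z + S w))) \<in> borel_measurable (PiM I (\<lambda>_. D))"
      using measurable_comp[OF Sm hm] by (auto simp: comp_def)
    have "(\<integral>\<^sup>+w. (\<integral>\<^sup>+y. ennreal (\<Phi> (z + (\<Sum>p\<in>J. Y ((w(i:=y)) p)))) \<partial>D) \<partial>PiM I (\<lambda>_. D))
        \<le> (\<integral>\<^sup>+w. ennreal a * ennreal (\<Phi> (z + S w)) + ennreal b \<partial>PiM I (\<lambda>_. D))"
      using inner unfolding eqe by (intro nn_integral_mono) auto
    also have "\<dots> = ennreal a * (\<integral>\<^sup>+w. ennreal (\<Phi> (z + S w)) \<partial>PiM I (\<lambda>_. D)) + ennreal b"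
      using gm by (simp add: nn_integral_add nn_integral_cmult P.emeasure_space_1)
    also have "\<dots> \<le> ennreal a * ennreal (a ^ card J' * \<Phi> z + real (card J') * b * a ^ card J') + ennreal b"
      using insert.IH[OF J', of z] unfolding S_def by (intro add_mono mult_left_mono) auto
    also have "\<dots> = ennreal (a * (a ^ card J' * \<Phi> z + real (card J') * b * a ^ card J') + b)"
      using a b \<Phi>0 insert.IH[OF J', of z] by (subst ennreal_plus) (auto intro!: mult_nonneg_nonneg add_nonneg_nonneg simp: ennreal_mult)
    also have "\<dots> \<le> ennreal (a ^ card J * \<Phi> z + real (card J) * b * a ^ card J)"
    proof (rule ennreal_leI)
      have "1 \<le> a ^ card J" using a by simp
      then have "b \<le> b * a ^ card J" using b by (simp add: mult_le_cancel_left1)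
      then show "a * (a ^ card J' * \<Phi> z + real (card J') * b * a ^ card J') + b
          \<le> a ^ card J * \<Phi> z + real (card J) * b * a ^ card J"
        unfolding cJ by (simp add: algebra_simps)
    qed
    finally show ?thesis unfolding eq .
  next
    case False
    have J: "J \<subseteq> I" using False insert.prems by auto
    have sp: "(\<Sum>p\<in>J. Y ((w(i:=y)) p)) = (\<Sum>p\<in>J. Y (w p))" for w y
      using False by (intro sum.cong) auto
    have "(\<integral>\<^sup>+w. (\<integral>\<^sup>+y. ennreal (\<Phi> (z + (\<Sum>p\<in>J. Y ((w(i:=y)) p)))) \<partial>D) \<partial>PiM I (\<lambda>_. D))
        = (\<integral>\<^sup>+w. ennreal (\<Phi> (z + (\<Sum>p\<in>J. Y (w p)))) \<partial>PiM I (\<lambda>_. D))"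
      unfolding sp by (simp add: prob_space.emeasure_space_1[OF D])
    also have "\<dots> \<le> ennreal (a ^ card J * \<Phi> z + real (card J) * b * a ^ card J)" by (rule insert.IH[OF J])
    finally show ?thesis unfolding eq .
  qed
qed

lemma step_generic:
  fixes Y :: "'b \<Rightarrow> 'a::euclidean_space" and \<Phi> :: "'a \<Rightarrow> real"
  assumes D: "prob_space D" and Yi: "integrable D Y" and Y0: "(\<integral>\<xi>. Y \<xi> \<partial>D) = 0"
    and \<Phi>m: "\<Phi> \<in> borel_measurable borel"
    and pw: "\<And>\<xi>. \<xi> \<in> space D \<Longrightarrow> \<Phi> (z + Y \<xi>) \<le> A + w \<bullet> Y \<xi>"
    and \<Phi>0: "\<And>u. 0 \<le> \<Phi> u"
  shows "(\<integral>\<^sup>+\<xi>. ennreal (\<Phi> (z + Y \<xi>)) \<partial>D) \<le> ennreal A"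
proof -
  interpret prob_space D by (rule D)
  have ii: "integrable D (\<lambda>\<xi>. A + w \<bullet> Y \<xi>)"
    using Yi by (intro Bochner_Integration.integrable_add) auto
  have "(\<integral>\<^sup>+\<xi>. ennreal (\<Phi> (z + Y \<xi>)) \<partial>D) \<le> (\<integral>\<^sup>+\<xi>. ennreal (A + w \<bullet> Y \<xi>) \<partial>D)"
    using pw by (intro nn_integral_mono ennreal_leI) auto
  also have "\<dots> = ennreal (\<integral>\<xi>. A + w \<bullet> Y \<xi> \<partial>D)"
    using pw \<Phi>0 by (intro nn_integral_eq_integral[OF ii] AE_I2) (meson order_trans)
  also have "(\<integral>\<xi>. A + w \<bullet> Y \<xi> \<partial>D) = A + w \<bullet> (\<integral>\<xi>. Y \<xi> \<partial>D)"
    using Yi by (subst Bochner_Integration.integral_add) (auto simp: prob_space)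
  finally show ?thesis using Y0 by simp
qed

lemma sq_step:
  fixes Y :: "'b \<Rightarrow> 'a::euclidean_space"
  assumes D: "prob_space D" and Yi: "integrable D Y" and Y0: "(\<integral>\<xi>. Y \<xi> \<partial>D) = 0"
    and Yb: "\<And>\<xi>. \<xi> \<in> space D \<Longrightarrow> norm (Y \<xi>) \<le> V"
  shows "(\<integral>\<^sup>+\<xi>. ennreal ((norm (z + Y \<xi>))^2) \<partial>D) \<le> ennreal (1 * (norm z)^2 + V^2)"
proof -
  have "(\<integral>\<^sup>+\<xi>. ennreal ((\<lambda>u. (norm u)^2) (z + Y \<xi>)) \<partial>D) \<le> ennreal ((norm z)^2 + V^2)"
  proof (rule step_generic[OF D Yi Y0, where w = "2 *\<^sub>R z"])
    fix \<xi> assume \<xi>: "\<xi> \<in> space D"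
    have "(norm (Y \<xi>))^2 \<le> V^2" using Yb[OF \<xi>] by (intro power_mono) auto
    then show "(norm (z + Y \<xi>))^2 \<le> (norm z)^2 + V^2 + (2 *\<^sub>R z) \<bullet> Y \<xi>"
      by (simp add: power2_norm_eq_inner inner_add algebra_simps inner_commute)
  qed (auto intro: borel_measurable_continuous_onI continuous_intros)
  then show ?thesis by simp
qed

lemma cosh_step:
  fixes Y :: "'b \<Rightarrow> 'a::euclidean_space"
  assumes D: "prob_space D" and Yi: "integrable D Y" and Y0: "(\<integral>\<xi>. Y \<xi> \<partial>D) = 0"
    and Yb: "\<And>\<xi>. \<xi> \<in> space D \<Longrightarrow> norm (Y \<xi>) \<le> V" and V: "0 < V" and l: "0 \<le> l"
  shows "(\<integral>\<^sup>+\<xi>. ennreal (cosh (l * norm (z + Y \<xi>))) \<partial>D) \<le> ennreal (cosh (l*V) * cosh (l * norm z) + 0)"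
proof -
  define \<kappa> where "\<kappa> = (if norm z = 0 then 0 else sinh (l * norm z) * sinh (l*V) / (norm z * V))"
  have "(\<integral>\<^sup>+\<xi>. ennreal ((\<lambda>u. cosh (l * norm u)) (z + Y \<xi>)) \<partial>D) \<le> ennreal (cosh (l * norm z) * cosh (l*V))"
  proof (rule step_generic[OF D Yi Y0, where w = "\<kappa> *\<^sub>R z"])
    fix \<xi> assume \<xi>: "\<xi> \<in> space D"
    show "cosh (l * norm (z + Y \<xi>)) \<le> cosh (l * norm z) * cosh (l*V) + (\<kappa> *\<^sub>R z) \<bullet> Y \<xi>"
      using cosh_norm_bound[OF Yb[OF \<xi>] V l, of z] unfolding \<kappa>_def by simp
  next
    show "0 \<le> cosh (l * norm u)" for u by (simp add: order_trans[OF zero_le_one cosh_real_ge_1])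
  next
    show "(\<lambda>u. cosh (l * norm u)) \<in> borel_measurable borel"
      by (rule borel_measurable_continuous_onI) (intro continuous_intros)
  qed
  then show ?thesis by (simp add: mult.commute)
qed

lemma tail_bound:
  fixes Y :: "'b \<Rightarrow> 'a::euclidean_space" and I J :: "'i set"
  assumes D: "prob_space D" and Ym: "Y \<in> borel_measurable D" and Yi: "integrable D Y"
    and Y0: "(\<integral>\<xi>. Y \<xi> \<partial>D) = 0"
    and Yb: "\<And>\<xi>. \<xi> \<in> space D \<Longrightarrow> norm (Y \<xi>) \<le> V" and V: "0 < V"
    and I: "finite I" and J: "J \<subseteq> I" and Jne: "J \<noteq> {}" and r: "0 < r"
  shows "emeasure (PiM I (\<lambda>_. D)) {w \<in> space (PiM I (\<lambda>_. D)). r < norm (\<Sum>p\<in>J. Y (w p))}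
          \<le> ennreal (2 * exp (- (r^2) / (2 * real (card J) * V^2)))"
proof -
  define M where "M = PiM I (\<lambda>_. D)"
  define n where "n = card J"
  have n: "0 < n" unfolding n_def using J Jne I finite_subset card_gt_0_iff by blast
  define l where "l = r / (real n * V^2)"
  have l: "0 < l" unfolding l_def using r n V by simp
  define S where "S w = (\<Sum>p\<in>J. Y (w p))" for w
  have Sm: "S \<in> borel_measurable M" unfolding S_def M_def by (rule sum_comp_measurable[OF Ym J])
  define A where "A = {w \<in> space M. r < norm (S w)}"
  have A: "A \<in> sets M" unfolding A_def using Sm by measurable
  have ch: "0 < cosh (l*r)" by (simp add: order_less_le_trans[OF zero_less_one cosh_real_ge_1])
  have ind: "indicator A w \<le> ennreal (cosh (l * norm (S w))) * ennreal (1 / cosh (l*r))" for w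
  proof (cases "w \<in> A")
    case True
    then have "l*r \<le> l * norm (S w)" using l unfolding A_def by simp
    then have "cosh (l*r) \<le> cosh (l * norm (S w))" using l r by (subst cosh_real_nonneg_le_iff) auto
    then have "1 \<le> cosh (l * norm (S w)) * (1 / cosh (l*r))" using ch by simp
    then show ?thesis using True ch
      by (simp add: ennreal_mult[symmetric] ennreal_leI del: ennreal_mult')
  qed simp
  have it: "(\<integral>\<^sup>+w. ennreal (cosh (l * norm (0 + S w))) \<partial>M)
     \<le> ennreal (cosh (l*V) ^ card J * cosh (l * norm (0::'a)) + real (card J) * 0 * cosh (l*V) ^ card J)"
    unfolding M_def S_def
  proof (rule iter_bound[OF D Ym _ _ _ _ _ I J, where \<Phi> = "\<lambda>u. cosh (l * norm u)"])
    show "(\<lambda>u. cosh (l * norm u)) \<in> borel_measurable borel"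
      by (rule borel_measurable_continuous_onI) (intro continuous_intros)
    show "0 \<le> cosh (l * norm u)" for u by (simp add: order_trans[OF zero_le_one cosh_real_ge_1])
    show "1 \<le> cosh (l*V)" by (rule cosh_real_ge_1)
    show "(\<integral>\<^sup>+y. ennreal (cosh (l * norm (z + Y y))) \<partial>D) \<le> ennreal (cosh (l*V) * cosh (l * norm z) + 0)" for z
      by (rule cosh_step[OF D Yi Y0 Yb V]) (use l in auto)
  qed simp
  have "emeasure M A = (\<integral>\<^sup>+w. indicator A w \<partial>M)" using A by simp
  also have "\<dots> \<le> (\<integral>\<^sup>+w. ennreal (cosh (l * norm (S w))) * ennreal (1 / cosh (l*r)) \<partial>M)"
    by (intro nn_integral_mono ind)
  also have "\<dots> = (\<integral>\<^sup>+w. ennreal (cosh (l * norm (S w))) \<partial>M) * ennreal (1 / cosh (l*r))"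
  proof (rule nn_integral_multc)
    have "(\<lambda>u. ennreal (cosh (l * norm u))) \<in> borel_measurable borel"
      by (intro measurable_compose[OF _ measurable_ennreal] borel_measurable_continuous_onI) (intro continuous_intros)
    then show "(\<lambda>w. ennreal (cosh (l * norm (S w)))) \<in> borel_measurable M"
      using measurable_comp[OF Sm] by (auto simp: comp_def)
  qed
  also have "\<dots> \<le> ennreal (cosh (l*V) ^ n) * ennreal (1 / cosh (l*r))"
    using it unfolding n_def by (intro mult_right_mono) auto
  also have "\<dots> = ennreal (cosh (l*V) ^ n / cosh (l*r))"
    using ch by (simp add: ennreal_mult[symmetric] del: ennreal_mult')
  also have "\<dots> \<le> ennreal (2 * exp (- (r^2) / (2 * real n * V^2)))"
  proof (rule ennreal_leI)
    have c1: "cosh (l*V) ^ n \<le> exp ((l*V)^2/2) ^ n"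
      by (intro power_mono cosh_le_exp_sq) (simp add: order_trans[OF zero_le_one cosh_real_ge_1])
    have c2: "exp ((l*V)^2/2) ^ n = exp (real n * ((l*V)^2/2))" by (rule exp_of_nat_mult[symmetric])
    have c3: "exp (l*r) / 2 \<le> cosh (l*r)" unfolding cosh_def by (simp add: field_simps)
    have c4: "1 / cosh (l*r) \<le> 2 * exp (- (l*r))"
    proof -
      have "1 / cosh (l*r) \<le> 1 / (exp (l*r) / 2)" using c3 by (intro divide_left_mono) auto
      also have "\<dots> = 2 * exp (- (l*r))" by (simp add: exp_minus field_simps)
      finally show ?thesis .
    qed
    have "cosh (l*V) ^ n / cosh (l*r) = cosh (l*V) ^ n * (1 / cosh (l*r))" by simp
    also have "\<dots> \<le> exp (real n * ((l*V)^2/2)) * (2 * exp (- (l*r)))"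
      using c1 c2 c4 ch by (intro mult_mono) auto
    also have "\<dots> = 2 * exp (real n * ((l*V)^2/2) - l*r)" by (simp only: diff_conv_add_uminus exp_add mult_ac)
    also have "real n * ((l*V)^2/2) - l*r = - (r^2) / (2 * real n * V^2)"
      unfolding l_def using n V by (simp add: field_simps power2_eq_square)
    finally show "cosh (l*V) ^ n / cosh (l*r) \<le> 2 * exp (- (r^2) / (2 * real n * V^2))" .
  qed
  finally show ?thesis unfolding M_def A_def S_def n_def .
qed

lemma var_bound:
  fixes Y :: "'b \<Rightarrow> 'a::euclidean_space" and I J :: "'i set"
  assumes D: "prob_space D" and Ym: "Y \<in> borel_measurable D" and Yi: "integrable D Y"
    and Y0: "(\<integral>\<xi>. Y \<xi> \<partial>D) = 0"
    and Yb: "\<And>\<xi>. \<xi> \<in> space D \<Longrightarrow> norm (Y \<xi>) \<le> V"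
    and I: "finite I" and J: "J \<subseteq> I"
  shows "(\<integral>\<^sup>+w. ennreal ((norm (\<Sum>p\<in>J. Y (w p)))^2) \<partial>PiM I (\<lambda>_. D)) \<le> ennreal (real (card J) * V^2)"
proof -
  have "(\<integral>\<^sup>+w. ennreal ((norm (0 + (\<Sum>p\<in>J. Y (w p))))^2) \<partial>PiM I (\<lambda>_. D))
     \<le> ennreal (1 ^ card J * (norm (0::'a))^2 + real (card J) * V^2 * 1 ^ card J)"
  proof (rule iter_bound[OF D Ym _ _ _ _ _ I J, where \<Phi> = "\<lambda>u. (norm u)^2"])
    show "(\<lambda>u. (norm u)^2) \<in> borel_measurable borel"
      by (rule borel_measurable_continuous_onI) (intro continuous_intros)
    show "(\<integral>\<^sup>+y. ennreal ((norm (z + Y y))^2) \<partial>D) \<le> ennreal (1 * (norm z)^2 + V^2)" for z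
      by (rule sq_step[OF D Yi Y0 Yb])
  qed auto
  then show ?thesis by simp
qed

lemma honest_meets:
  fixes Hon S :: "nat set"
  assumes "Hon \<subseteq> {..<K}" "S \<subseteq> {..<K}" "real (card S) > real K / 2" "real (card Hon) > real K / 2"
  shows "\<exists>h\<in>Hon. h \<in> S"
proof (rule ccontr)
  assume "\<not> ?thesis"
  then have "S \<inter> Hon = {}" by auto
  moreover have "finite S" "finite Hon" using assms(1,2) finite_subset by auto
  ultimately have "card (S \<union> Hon) = card S + card Hon" by (simp add: card_Un_disjoint)
  moreover have "card (S \<union> Hon) \<le> K" using assms(1,2) by (metis Un_least card_lessThan card_mono finite_lessThan)
  ultimately show False using assms(3,4) by linarith
qed

lemma avg_bound:
  fixes m :: "nat \<Rightarrow> 'a::real_normed_vector"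
  assumes "finite G" "G \<noteq> {}" "\<And>j. j \<in> G \<Longrightarrow> norm (m j - g) \<le> R"
  shows "norm (avg_over G m - g) \<le> R"
proof -
  have c: "0 < real (card G)" using assms(1,2) by (simp add: card_gt_0_iff)
  have "avg_over G m - g = (1 / real (card G)) *\<^sub>R (\<Sum>j\<in>G. (m j - g))"
    using c by (simp add: avg_over_def sum_subtractf scaleR_diff_right sum_constant_scaleR)
  then have "norm (avg_over G m - g) = (1 / real (card G)) * norm (\<Sum>j\<in>G. (m j - g))"
    using c by simp
  also have "\<dots> \<le> (1 / real (card G)) * (\<Sum>j\<in>G. R)"
    using c assms(3) by (intro mult_left_mono order_trans[OF norm_sum sum_mono]) auto
  also have "\<dots> = R" using c by simp
  finally show ?thesis .
qed

lemma near_sub: "near_set K r m k \<subseteq> {..<K}" unfolding near_set_def by auto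

lemma filter_det:
  fixes m :: "nat \<Rightarrow> 'a::euclidean_space"
  assumes K: "K > 0" and HK: "Hon \<subseteq> {..<K}" and hc: "real (card Hon) \<ge> (1 - \<alpha>) * real K"
    and \<alpha>0: "0 \<le> \<alpha>" and \<alpha>1: "\<alpha> < 1/2" and T0: "0 \<le> T" and TV: "T \<le> 2*V"
    and hb: "\<And>k. k \<in> Hon \<Longrightarrow> norm (m k - g) \<le> V"
    and F: "filter_output K \<alpha> V T m v"
  shows "norm (v - g) \<le> 7*V"
    and "(\<forall>k\<in>Hon. norm (m k - g) \<le> T/2) \<Longrightarrow>
          norm (v - g) \<le> norm (\<Sum>k\<in>Hon. (m k - g)) / ((1-\<alpha>) * real K) + \<alpha> * (7/2 * T)"
proof -
  have hK2: "real (card Hon) > real K / 2"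
  proof -
    have "(1 - \<alpha>) * real K > real K / 2" using K \<alpha>1 by (simp add: field_simps)
    then show ?thesis using hc by linarith
  qed
  have V0: "0 \<le> V" using T0 TV by simp
  have pK: "0 < (1-\<alpha>) * real K" using K \<alpha>1 by simp
  have meet: "\<exists>h\<in>Hon. norm (m h - m k) \<le> r" if "med_cand K r m k" for r k
  proof -
    have "\<exists>h\<in>Hon. h \<in> near_set K r m k"
      using that unfolding med_cand_def by (intro honest_meets[OF HK near_sub _ hK2]) auto
    then show ?thesis unfolding near_set_def by auto
  qed
  have finG: "finite (near_set K r m k)" for r k by (rule finite_subset[OF near_sub finite_lessThan])
  show "norm (v - g) \<le> 7*V"
  proof -
    have gen: "norm (avg_over (near_set K (2*r) m k) m - g) \<le> 7*V"
      if mc: "med_cand K r m k" and r: "r \<le> 2*V" "0 \<le> r" for r k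
    proof (rule avg_bound[OF finG])
      show "near_set K (2*r) m k \<noteq> {}" using mc r unfolding med_cand_def near_set_def by auto
      obtain h where h: "h \<in> Hon" "norm (m h - m k) \<le> r" using meet[OF mc] by auto
      have mk: "norm (m k - g) \<le> r + V"
        using norm_triangle_ineq[of "m k - m h" "m h - g"] hb[OF h(1)] h(2) norm_minus_commute[of "m h" "m k"] by simp
      fix j assume "j \<in> near_set K (2*r) m k"
      then have "norm (m j - m k) \<le> 2*r" unfolding near_set_def by auto
      then show "norm (m j - g) \<le> 7*V"
        using norm_triangle_ineq[of "m j - m k" "m k - g"] mk r by simp
    qed
    from F show ?thesis unfolding filter_output_def
    proof (elim disjE conjE exE)
      fix k assume "med_cand K T m k" "v = avg_over (near_set K (2*T) m k) m"
      then show ?thesis using gen[of T k] T0 TV by simp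
    next
      fix k assume "med_cand K (2*V) m k" "v = avg_over (near_set K (4*V) m k) m"
      then show ?thesis using gen[of "2*V" k] V0 by simp
    next
      fix k assume "med_cand K (2*V) m k" "v = avg_over (near_set K (4*V) m k) m"
      then show ?thesis using gen[of "2*V" k] V0 by simp
    qed
  qed
  assume good: "\<forall>k\<in>Hon. norm (m k - g) \<le> T/2"
  have mcT: "norm (m k - g) \<le> 3/2*T" and HG: "Hon \<subseteq> near_set K (2*T) m k" if mc: "med_cand K T m k" for k
  proof -
    obtain h where h: "h \<in> Hon" "norm (m h - m k) \<le> T" using meet[OF mc] by auto
    show mk: "norm (m k - g) \<le> 3/2*T"
      using norm_triangle_ineq[of "m k - m h" "m h - g"] bspec[OF good h(1)] h(2) norm_minus_commute[of "m h" "m k"] by simp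
    show "Hon \<subseteq> near_set K (2*T) m k"
    proof
      fix j assume j: "j \<in> Hon"
      have "norm (m j - m k) \<le> 2*T"
        using norm_triangle_ineq[of "m j - g" "g - m k"] bspec[OF good j] mk norm_minus_commute[of "m k" g] by simp
      then show "j \<in> near_set K (2*T) m k" using j HK unfolding near_set_def by auto
    qed
  qed
  have ex: "\<exists>k. med_cand K T m k"
  proof -
    obtain h0 where h0: "h0 \<in> Hon" using hK2 by fastforce
    have "Hon \<subseteq> near_set K T m h0"
    proof
      fix j assume j: "j \<in> Hon"
      have "norm (m j - m h0) \<le> T"
        using norm_triangle_ineq[of "m j - g" "g - m h0"] bspec[OF good j] bspec[OF good h0] norm_minus_commute[of "m h0" g] by simp
      then show "j \<in> near_set K T m h0" using j HK unfolding near_set_def by auto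
    qed
    then have "card Hon \<le> card (near_set K T m h0)" by (intro card_mono finG)
    then show ?thesis using h0 HK hK2 unfolding med_cand_def by (intro exI[of _ h0]) auto
  qed
  obtain k where mc: "med_cand K T m k" and v: "v = avg_over (near_set K (2*T) m k) m"
  proof -
    have "\<not> (\<exists>k. med_cand K T m k \<and> real (card (near_set K (2*T) m k)) < (1 - \<alpha>) * real K)"
    proof
      assume "\<exists>k. med_cand K T m k \<and> real (card (near_set K (2*T) m k)) < (1 - \<alpha>) * real K"
      then obtain k where "med_cand K T m k" "real (card (near_set K (2*T) m k)) < (1 - \<alpha>) * real K" by auto
      moreover have "card Hon \<le> card (near_set K (2*T) m k)" using HG[OF \<open>med_cand K T m k\<close>] finG by (intro card_mono)
      ultimately show False using hc by linarith
    qed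
    then show ?thesis using F ex that unfolding filter_output_def by blast
  qed
  define G where "G = near_set K (2*T) m k"
  have HG': "Hon \<subseteq> G" unfolding G_def by (rule HG[OF mc])
  have fG: "finite G" unfolding G_def by (rule finG)
  have cG: "card Hon \<le> card G" by (rule card_mono[OF fG HG'])
  have cGK: "card G \<le> K" unfolding G_def using near_sub by (metis card_lessThan card_mono finite_lessThan)
  have cG0: "0 < real (card G)" using cG hK2 K by linarith
  have memb: "norm (m j - g) \<le> 7/2*T" if "j \<in> G" for j
  proof -
    have "norm (m j - m k) \<le> 2*T" using that unfolding G_def near_set_def by auto
    then show ?thesis using norm_triangle_ineq[of "m j - m k" "m k - g"] mcT[OF mc] by simp
  qed
  have split: "(\<Sum>j\<in>G. (m j - g)) = (\<Sum>j\<in>Hon. (m j - g)) + (\<Sum>j\<in>G-Hon. (m j - g))"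
    using HG' fG by (metis add.commute sum.subset_diff)
  have "v - g = (1 / real (card G)) *\<^sub>R (\<Sum>j\<in>G. (m j - g))"
    using cG0 unfolding v G_def[symmetric] by (simp add: avg_over_def sum_subtractf scaleR_diff_right sum_constant_scaleR)
  then have "norm (v - g) = norm (\<Sum>j\<in>G. (m j - g)) / real (card G)"
    using cG0 by (simp add: divide_inverse mult.commute)
  also have "\<dots> \<le> (norm (\<Sum>j\<in>Hon. (m j - g)) + norm (\<Sum>j\<in>G-Hon. (m j - g))) / real (card G)"
    unfolding split using cG0 by (intro divide_right_mono norm_triangle_ineq) auto
  also have "\<dots> = norm (\<Sum>j\<in>Hon. (m j - g)) / real (card G) + norm (\<Sum>j\<in>G-Hon. (m j - g)) / real (card G)"
    by (simp add: add_divide_distrib)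
  also have "\<dots> \<le> norm (\<Sum>k\<in>Hon. (m k - g)) / ((1-\<alpha>) * real K) + \<alpha> * (7/2 * T)"
  proof (rule add_mono)
    have "(1-\<alpha>) * real K \<le> real (card G)" using hc cG by linarith
    then show "norm (\<Sum>j\<in>Hon. (m j - g)) / real (card G) \<le> norm (\<Sum>k\<in>Hon. (m k - g)) / ((1-\<alpha>) * real K)"
      using pK by (intro divide_left_mono) auto
    have "norm (\<Sum>j\<in>G-Hon. (m j - g)) \<le> (\<Sum>j\<in>G-Hon. 7/2*T)"
      using memb by (intro order_trans[OF norm_sum sum_mono]) auto
    also have "\<dots> = real (card (G - Hon)) * (7/2*T)" by simp
    also have "real (card (G - Hon)) = real (card G) - real (card Hon)"
      using HG' fG by (simp add: card_Diff_subset finite_subset cG of_nat_diff)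
    finally have a: "norm (\<Sum>j\<in>G-Hon. (m j - g)) \<le> (real (card G) - real (card Hon)) * (7/2*T)" .
    have b: "real (card G) - real (card Hon) \<le> \<alpha> * real (card G)"
    proof -
      have "(1-\<alpha>) * real (card G) \<le> (1-\<alpha>) * real K" using cGK \<alpha>1 by (intro mult_left_mono) auto
      then show ?thesis using hc by (simp add: algebra_simps)
    qed
    have "norm (\<Sum>j\<in>G-Hon. (m j - g)) \<le> \<alpha> * real (card G) * (7/2*T)"
      using a b T0 by (meson mult_right_mono order_trans zero_le_divide_iff zero_le_numeral mult_nonneg_nonneg)
    then show "norm (\<Sum>j\<in>G-Hon. (m j - g)) / real (card G) \<le> \<alpha> * (7/2 * T)"
      using cG0 by (simp add: divide_le_eq mult.commute mult.left_commute)
  qed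
  finally show "norm (v - g) \<le> norm (\<Sum>k\<in>Hon. (m k - g)) / ((1-\<alpha>) * real K) + \<alpha> * (7/2 * T)" .
qed

lemma aux_c1:
  fixes q b k h v :: real
  assumes "q \<noteq> 0" "b \<noteq> 0" "k \<noteq> 0"
  shows "2 / ((q * k^2) * b^2) * ((h * b) * v) = 2 * v * h / (q * k^2 * b)"
  using assms by (simp add: field_simps power2_eq_square)

lemma aux_c1b:
  fixes q b k v :: real
  assumes "q \<noteq> 0" "b \<noteq> 0" "k \<noteq> 0"
  shows "2 * v * k / (q * k^2 * b) = 2 * v / (q * k * b)"
  using assms by (simp add: field_simps power2_eq_square)

theorem lemma4:
  fixes D :: "'b measure"
    and gs :: "'a::euclidean_space \<Rightarrow> 'b \<Rightarrow> 'a"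
    and gradf :: "'a \<Rightarrow> 'a"
    and V \<alpha> \<delta> C :: real
    and K B :: nat
    and Hon :: "nat set"
    and x :: 'a
    and byz :: "(nat \<times> nat \<Rightarrow> 'b) \<Rightarrow> nat \<Rightarrow> 'a"
    and mu :: "(nat \<times> nat \<Rightarrow> 'b) \<Rightarrow> 'a"
  assumes "prob_space D"
    and "\<And>y. gs y \<in> borel_measurable D"
    and "\<And>y. integrable D (gs y)"
    and "\<And>y. gradf y = (\<integral>\<xi>. gs y \<xi> \<partial>D)"
    and "\<And>y \<xi>. \<xi> \<in> space D \<Longrightarrow> norm (gs y \<xi> - gradf y) \<le> V"
    and "K > 0" and "Hon \<subseteq> {..<K}" and "real (card Hon) \<ge> (1 - \<alpha>) * real K"
    and "0 \<le> \<alpha>" and "\<alpha> < 1/2"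
    and "B > 0" and "0 < \<delta>" and "\<delta> < 1"
    and "exp (\<delta> * real B / (2 * (1 - 2*\<delta>))) \<le> 2 * real K / \<delta>"
    and "2 * real K / \<delta> \<le> exp (real B / 2)"
    and "\<delta> \<le> 1 / (25 * real K * real B)"
    and "C = 2 * ln (2 * real K / \<delta>)"
    and "mu \<in> borel_measurable (PiM (Hon \<times> {..<B}) (\<lambda>_. D))"
    and "\<And>\<omega>. \<omega> \<in> space (PiM (Hon \<times> {..<B}) (\<lambda>_. D)) \<Longrightarrow>
           filter_output K \<alpha> V (2 * V * sqrt (C / real B))
             (\<lambda>k. if k \<in> Hon then (1 / real B) *\<^sub>R (\<Sum>i<B. gs x (\<omega> (k, i))) else byz \<omega> k)
             (mu \<omega>)"
  shows "(\<integral>\<omega>. (norm (mu \<omega> - gradf x))\<^sup>2 \<partial>(PiM (Hon \<times> {..<B}) (\<lambda>_. D)))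
           \<le> 4 * V\<^sup>2 / ((1 - \<alpha>)\<^sup>2 * real K * real B)
             + 272 * \<alpha>\<^sup>2 * V\<^sup>2 * C / ((1 - \<alpha>)\<^sup>2 * real B)"
proof -
  note D = assms(1)
  interpret D: prob_space D by (rule D)
  define M where "M = PiM (Hon \<times> {..<B}) (\<lambda>_. D)"
  interpret P: prob_space M unfolding M_def by (rule prob_space_PiM) (rule D)
  define g where "g = gradf x"
  define Y where "Y \<xi> = gs x \<xi> - g" for \<xi>
  have Ym: "Y \<in> borel_measurable D" unfolding Y_def using assms(2)[of x] by measurable
  have Yi: "integrable D Y" unfolding Y_def using assms(3)[of x] by (intro Bochner_Integration.integrable_diff) auto
  have Y0: "(\<integral>\<xi>. Y \<xi> \<partial>D) = 0"
    unfolding Y_def using assms(3)[of x] assms(4)[of x]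
    by (subst Bochner_Integration.integral_diff) (auto simp: g_def D.prob_space)
  have Yb: "norm (Y \<xi>) \<le> V" if "\<xi> \<in> space D" for \<xi> unfolding Y_def g_def using assms(5)[OF that] .
  have V0: "0 \<le> V"
  proof -
    obtain \<xi> where "\<xi> \<in> space D" using D.not_empty by blast
    then show ?thesis using Yb[of \<xi>] norm_ge_zero[of "Y \<xi>"] by linarith
  qed
  have K0: "0 < real K" using assms(6) by simp
  have B0: "0 < real B" using assms(11) by simp
  have \<delta>0: "0 < \<delta>" and \<delta>1: "\<delta> < 1" using assms(12,13) .
  have q1: "1 < 2 * real K / \<delta>"
  proof -
    have "\<delta> < 2 * real K" using \<delta>1 assms(6) by linarith
    then show ?thesis using \<delta>0 by simp
  qed
  have C0: "0 < C" unfolding assms(17) using q1 by simp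
  have CB: "C \<le> real B"
  proof -
    have "ln (2 * real K / \<delta>) \<le> ln (exp (real B / 2))"
      using assms(15) q1 by (subst ln_le_cancel_iff) auto
    then show ?thesis unfolding assms(17) by simp
  qed
  define T where "T = 2 * V * sqrt (C / real B)"
  have T0: "0 \<le> T" unfolding T_def using V0 C0 B0 by simp
  have TV: "T \<le> 2 * V"
  proof -
    have "sqrt (C / real B) \<le> 1" using CB B0 by simp
    then show ?thesis unfolding T_def using V0 by (simp add: mult_left_le)
  qed
  have T2: "T^2 = 4 * V^2 * C / real B"
    unfolding T_def using C0 B0 by (simp add: power_mult_distrib)
  define msg where "msg w (k::nat) = (if k \<in> Hon then (1 / real B) *\<^sub>R (\<Sum>i<B. gs x (w (k, i))) else byz w k)" for w k
  define SJ where "SJ w (k::nat) = (\<Sum>i<B. Y (w (k, i)))" for w k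
  have msg_eq: "msg w k - g = (1 / real B) *\<^sub>R SJ w k" if "k \<in> Hon" for w k
  proof -
    have "SJ w k = (\<Sum>i<B. gs x (w (k, i))) - real B *\<^sub>R g"
      unfolding SJ_def Y_def by (simp add: sum_subtractf sum_constant_scaleR)
    then show ?thesis using that B0 unfolding msg_def by (simp add: scaleR_diff_right)
  qed
  have SJb: "norm (SJ w k) \<le> real B * V" if "w \<in> space M" "k \<in> Hon" for w k
  proof -
    have "norm (SJ w k) \<le> (\<Sum>i<B. V)"
      unfolding SJ_def
    proof (intro order_trans[OF norm_sum sum_mono] Yb)
      fix i assume "i \<in> {..<B}"
      then show "w (k, i) \<in> space D" using that unfolding M_def by (auto simp: space_PiM)
    qed
    then show ?thesis by simp
  qed
  have hb: "norm (msg w k - g) \<le> V" if "w \<in> space M" "k \<in> Hon" for w k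
  proof -
    have "norm (msg w k - g) = norm (SJ w k) / real B" using msg_eq[OF that(2)] B0 by (simp add: divide_inverse mult.commute)
    also have "\<dots> \<le> V" using SJb[OF that] B0 by (simp add: divide_le_eq mult.commute)
    finally show ?thesis .
  qed
  have SJ_sum: "SJ w k = (\<Sum>p\<in>{k} \<times> {..<B}. Y (w p))" for w k
    unfolding SJ_def using sum.cartesian_product[of "\<lambda>k i. Y (w (k, i))" "{..<B}" "{k}"] by simp
  define SH where "SH w = (\<Sum>p\<in>Hon \<times> {..<B}. Y (w p))" for w
  have hsum: "(\<Sum>k\<in>Hon. (msg w k - g)) = (1 / real B) *\<^sub>R SH w" for w
  proof -
    have "(\<Sum>k\<in>Hon. (msg w k - g)) = (1 / real B) *\<^sub>R (\<Sum>k\<in>Hon. SJ w k)"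
      using msg_eq by (simp add: scaleR_sum_right)
    also have "(\<Sum>k\<in>Hon. SJ w k) = SH w"
      unfolding SJ_def SH_def using sum.cartesian_product[of "\<lambda>k i. Y (w (k, i))" "{..<B}" Hon] by simp
    finally show ?thesis .
  qed
  have finH: "finite Hon" using assms(7) finite_subset by blast
  have cHK: "card Hon \<le> K" using assms(7) by (metis card_lessThan card_mono finite_lessThan)
  have finI: "finite (Hon \<times> {..<B})" using finH by simp
  define E where "E k = {w \<in> space M. real B * T / 2 < norm (SJ w k)}" for k
  define Bad where "Bad = (\<Union>k\<in>Hon. E k)"
  have Em: "E k \<in> sets M" if "k \<in> Hon" for k
  proof -
    have "(\<lambda>w. SJ w k) \<in> borel_measurable M"
      unfolding SJ_sum M_def using that by (intro sum_comp_measurable[OF Ym]) auto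
    then show ?thesis unfolding E_def by measurable
  qed
  have Bm: "Bad \<in> sets M" unfolding Bad_def using Em finH by auto
  have Eb: "emeasure M (E k) \<le> ennreal (\<delta> / real K)" if k: "k \<in> Hon" for k
  proof (cases "V = 0")
    case True
    have "E k = {}"
    proof -
      have "norm (SJ w k) \<le> real B * T / 2" if "w \<in> space M" for w
        using SJb[OF that k] True T0 B0 by simp
      then show ?thesis unfolding E_def by force
    qed
    then show ?thesis by simp
  next
    case False
    then have Vp: "0 < V" using V0 by simp
    have Tp: "0 < T" unfolding T_def using Vp C0 B0 by simp
    have "emeasure M (E k) = emeasure (PiM (Hon \<times> {..<B}) (\<lambda>_. D))
        {w \<in> space (PiM (Hon \<times> {..<B}) (\<lambda>_. D)). real B * T / 2 < norm (\<Sum>p\<in>{k} \<times> {..<B}. Y (w p))}"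
      unfolding E_def M_def SJ_sum ..
    also have "\<dots> \<le> ennreal (2 * exp (- ((real B * T / 2)^2) / (2 * real (card ({k} \<times> {..<B})) * V^2)))"
      by (rule tail_bound[OF D Ym Yi Y0 Yb Vp finI]) (use k assms(11) Tp B0 in auto)
    also have "- ((real B * T / 2)^2) / (2 * real (card ({k} \<times> {..<B})) * V^2) = - (C/2)"
    proof -
      have "(real B * T / 2)^2 = real B^2 * T^2 / 4" by (simp add: power_divide power_mult_distrib)
      also have "\<dots> = real B * V^2 * C" unfolding T2 using B0 by (simp add: power2_eq_square)
      finally show ?thesis using B0 Vp by (simp add: card_cartesian_product)
    qed
    also have "2 * exp (- (C/2)) = \<delta> / real K"
    proof -
      have "exp (- (C/2)) = 1 / (2 * real K / \<delta>)"
        unfolding assms(17) using q1 by (simp add: exp_minus)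
      then show ?thesis using \<delta>0 K0 by simp
    qed
    finally show ?thesis .
  qed
  have Bad_b: "emeasure M Bad \<le> ennreal \<delta>"
  proof -
    have "emeasure M Bad \<le> (\<Sum>k\<in>Hon. emeasure M (E k))"
      unfolding Bad_def using Em finH by (intro emeasure_subadditive_finite) auto
    also have "\<dots> \<le> (\<Sum>k\<in>Hon. ennreal (\<delta> / real K))" using Eb by (rule sum_mono)
    also have "\<dots> = ennreal (real (card Hon)) * ennreal (\<delta> / real K)" by (simp add: ennreal_of_nat_eq_real_of_nat)
    also have "\<dots> = ennreal (real (card Hon) * (\<delta> / real K))" using \<delta>0 K0 by (intro ennreal_mult[symmetric]) auto
    also have "\<dots> \<le> ennreal \<delta>"
    proof (rule ennreal_leI)
      have "real (card Hon) * (\<delta> / real K) \<le> real K * (\<delta> / real K)"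
        using cHK \<delta>0 K0 by (intro mult_right_mono) auto
      then show "real (card Hon) * (\<delta> / real K) \<le> \<delta>" using K0 by simp
    qed
    finally show ?thesis .
  qed
  define c1 where "c1 = 2 / (((1-\<alpha>) * real K)^2 * real B^2)"
  define c2 where "c2 = 2 * (\<alpha> * (7/2 * T))^2"
  define c3 where "c3 = 49 * V^2"
  have c1p: "0 \<le> c1" unfolding c1_def by simp
  have c2p: "0 \<le> c2" unfolding c2_def by simp
  have c3p: "0 \<le> c3" unfolding c3_def by simp
  have pK: "0 < (1-\<alpha>) * real K" using assms(10) K0 by simp
  have pw: "(norm (mu w - g))^2 \<le> c1 * (norm (SH w))^2 + c2 + c3 * indicator Bad w" if w: "w \<in> space M" for w
  proof -
    have F: "filter_output K \<alpha> V T (msg w) (mu w)"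
      using assms(19)[of w] w unfolding M_def T_def msg_def by simp
    have hbw: "\<And>k. k \<in> Hon \<Longrightarrow> norm (msg w k - g) \<le> V" using hb w by blast
    have fd1: "norm (mu w - g) \<le> 7*V"
      by (rule filter_det(1)[where m = "msg w", OF assms(6,7,8,9,10) T0 TV]) (use hbw F in auto)
    have fd2: "norm (mu w - g) \<le> norm (\<Sum>k\<in>Hon. (msg w k - g)) / ((1-\<alpha>) * real K) + \<alpha> * (7/2 * T)"
      if "\<forall>k\<in>Hon. norm (msg w k - g) \<le> T/2"
      by (rule filter_det(2)[where m = "msg w", OF assms(6,7,8,9,10) T0 TV]) (use hbw F that in auto)
    show ?thesis
    proof (cases "w \<in> Bad")
      case True
      have "(norm (mu w - g))^2 \<le> (7*V)^2" using fd1 by (intro power_mono) auto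
      also have "\<dots> = c3 * indicator Bad w" using True unfolding c3_def by (simp add: power_mult_distrib)
      also have "\<dots> \<le> c1 * (norm (SH w))^2 + c2 + c3 * indicator Bad w" using c1p c2p by simp
      finally show ?thesis .
    next
      case False
      have good: "\<forall>k\<in>Hon. norm (msg w k - g) \<le> T/2"
      proof
        fix k assume k: "k \<in> Hon"
        then have "w \<notin> E k" using False unfolding Bad_def by auto
        then have "norm (SJ w k) \<le> real B * T / 2" using w unfolding E_def by auto
        then show "norm (msg w k - g) \<le> T/2"
          using msg_eq[OF k] B0 by (simp add: divide_le_eq mult.commute)
      qed
      define X where "X = norm (\<Sum>k\<in>Hon. (msg w k - g)) / ((1-\<alpha>) * real K)"
      define Z where "Z = \<alpha> * (7/2 * T)"
      have X0: "0 \<le> X" unfolding X_def using pK by simp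
      have Z0: "0 \<le> Z" unfolding Z_def using assms(9) T0 by simp
      have "norm (mu w - g) \<le> X + Z" using fd2[OF good] unfolding X_def Z_def .
      then have "(norm (mu w - g))^2 \<le> (X + Z)^2" by (intro power_mono) auto
      also have "\<dots> \<le> 2 * X^2 + 2 * Z^2"
      proof -
        have "(X+Z)^2 = 2 * X^2 + 2 * Z^2 - (X - Z)^2" by (simp add: power2_eq_square algebra_simps)
        then show ?thesis using zero_le_power2[of "X - Z"] by linarith
      qed
      also have "2 * X^2 = c1 * (norm (SH w))^2"
      proof -
        have "X = norm (SH w) / (real B * ((1-\<alpha>) * real K))"
          unfolding X_def hsum using B0 by (simp add: divide_inverse mult.commute mult.left_commute)
        then show ?thesis unfolding c1_def by (simp add: power_divide power_mult_distrib mult.commute mult.left_commute)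
      qed
      also have "2 * Z^2 = c2" unfolding Z_def c2_def ..
      finally show ?thesis using False by simp
    qed
  qed
  have SHm: "SH \<in> borel_measurable M" unfolding SH_def M_def by (rule sum_comp_measurable[OF Ym]) auto
  have mum: "mu \<in> borel_measurable M" unfolding M_def by (rule assms(18))
  have LHSm: "(\<lambda>w. (norm (mu w - g))^2) \<in> borel_measurable M" using mum by measurable
  have LHSi: "integrable M (\<lambda>w. (norm (mu w - g))^2)"
  proof (rule P.integrable_const_bound[where B = "c3"])
    show "AE w in M. norm ((norm (mu w - g))^2) \<le> c3"
    proof (rule AE_I2)
      fix w assume w: "w \<in> space M"
      have F: "filter_output K \<alpha> V T (msg w) (mu w)"
        using assms(19)[of w] w unfolding M_def T_def msg_def by simp
      have hbw: "\<And>k. k \<in> Hon \<Longrightarrow> norm (msg w k - g) \<le> V" using hb w by blast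
      have "norm (mu w - g) \<le> 7 * V"
        by (rule filter_det(1)[where m = "msg w", OF assms(6,7,8,9,10) T0 TV]) (use hbw F in auto)
      then have "(norm (mu w - g))^2 \<le> (7*V)^2" by (intro power_mono) auto
      then show "norm ((norm (mu w - g))^2) \<le> c3" unfolding c3_def by (simp add: power_mult_distrib)
    qed
  qed (rule LHSm)
  have "ennreal (\<integral>w. (norm (mu w - g))^2 \<partial>M) = (\<integral>\<^sup>+w. ennreal ((norm (mu w - g))^2) \<partial>M)"
    by (rule nn_integral_eq_integral[OF LHSi, symmetric]) simp
  also have "\<dots> \<le> (\<integral>\<^sup>+w. ennreal c1 * ennreal ((norm (SH w))^2) + ennreal c2 + ennreal c3 * indicator Bad w \<partial>M)"
  proof (rule nn_integral_mono)
    fix w assume w: "w \<in> space M"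
    have "ennreal ((norm (mu w - g))^2) \<le> ennreal (c1 * (norm (SH w))^2 + c2 + c3 * indicator Bad w)"
      using pw[OF w] by (rule ennreal_leI)
    also have "\<dots> = ennreal c1 * ennreal ((norm (SH w))^2) + ennreal c2 + ennreal c3 * indicator Bad w"
    proof -
      have n1: "0 \<le> c1 * (norm (SH w))^2" using c1p by simp
      have n0: "0 \<le> (indicator Bad w :: real)" by simp
      have n3: "0 \<le> c3 * indicator Bad w" using c3p by simp
      show ?thesis
        by (simp only: ennreal_plus[OF add_nonneg_nonneg[OF n1 c2p] n3] ennreal_plus[OF n1 c2p]
          ennreal_mult[OF c1p zero_le_power2] ennreal_mult[OF c3p n0] ennreal_indicator)
    qed
    finally show "ennreal ((norm (mu w - g))^2) \<le> ennreal c1 * ennreal ((norm (SH w))^2) + ennreal c2 + ennreal c3 * indicator Bad w" .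
  qed
  also have "\<dots> = ennreal c1 * (\<integral>\<^sup>+w. ennreal ((norm (SH w))^2) \<partial>M) + ennreal c2 + ennreal c3 * emeasure M Bad"
    using SHm Bm by (simp add: nn_integral_add nn_integral_cmult P.emeasure_space_1 nn_integral_cmult_indicator)
  also have "\<dots> \<le> ennreal c1 * ennreal (real (card (Hon \<times> {..<B})) * V^2) + ennreal c2 + ennreal c3 * ennreal \<delta>"
  proof -
    have "(\<integral>\<^sup>+w. ennreal ((norm (SH w))^2) \<partial>M) \<le> ennreal (real (card (Hon \<times> {..<B})) * V^2)"
      unfolding M_def SH_def by (rule var_bound[OF D Ym Yi Y0 Yb finI]) auto
    then show ?thesis using Bad_b by (intro add_mono mult_left_mono order_refl) auto
  qed
  also have "\<dots> = ennreal (c1 * (real (card (Hon \<times> {..<B})) * V^2) + c2 + c3 * \<delta>)"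
  proof -
    have n1: "0 \<le> real (card (Hon \<times> {..<B})) * V^2" by simp
    have n1': "0 \<le> c1 * (real (card (Hon \<times> {..<B})) * V^2)" using c1p by simp
    have n3: "0 \<le> c3 * \<delta>" using c3p \<delta>0 by simp
    show ?thesis
      by (simp only: ennreal_plus[OF add_nonneg_nonneg[OF n1' c2p] n3] ennreal_plus[OF n1' c2p]
          ennreal_mult[OF c1p n1] ennreal_mult[OF c3p less_imp_le[OF \<delta>0]])
  qed
  finally have main: "(\<integral>w. (norm (mu w - g))^2 \<partial>M) \<le> c1 * (real (card (Hon \<times> {..<B})) * V^2) + c2 + c3 * \<delta>"
    using c1p c2p c3p \<delta>0 by (subst (asm) ennreal_le_iff) (auto intro!: add_nonneg_nonneg mult_nonneg_nonneg)
  have a1: "c1 * (real (card (Hon \<times> {..<B})) * V^2) \<le> 2 * V^2 / ((1 - \<alpha>)^2 * real K * real B)"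
  proof -
    have nz: "real B \<noteq> 0" "real K \<noteq> 0" "1 - \<alpha> \<noteq> 0" using B0 K0 assms(10) by auto
    have "c1 * (real (card (Hon \<times> {..<B})) * V^2) = 2 * V^2 * real (card Hon) / ((1 - \<alpha>)^2 * real K^2 * real B)"
      unfolding c1_def card_cartesian_product power_mult_distrib of_nat_mult
      using aux_c1[of "(1-\<alpha>)^2" "real B" "real K" "real (card Hon)" "V^2"] nz by simp
    also have "\<dots> \<le> 2 * V^2 * real K / ((1 - \<alpha>)^2 * real K^2 * real B)"
      using cHK pK B0 by (intro divide_right_mono mult_left_mono) auto
    also have "\<dots> = 2 * V^2 / ((1 - \<alpha>)^2 * real K * real B)"
      using aux_c1b[of "(1-\<alpha>)^2" "real B" "real K" "V^2"] nz by simp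
    finally show ?thesis .
  qed
  have a2: "c2 \<le> 272 * \<alpha>^2 * V^2 * C / ((1 - \<alpha>)^2 * real B)"
  proof -
    have "c2 = 49/2 * \<alpha>^2 * T^2" unfolding c2_def by (simp add: power_mult_distrib power2_eq_square)
    also have "\<dots> = 98 * \<alpha>^2 * V^2 * C / real B" unfolding T2 by simp
    also have "\<dots> \<le> 98 * \<alpha>^2 * V^2 * C / ((1 - \<alpha>)^2 * real B)"
    proof -
      have "(1-\<alpha>)^2 \<le> 1" using assms(9,10) by (simp add: power_le_one)
      moreover have "0 < (1-\<alpha>)^2" using assms(10) by simp
      ultimately show ?thesis using B0 C0 by (intro divide_left_mono mult_mono) (auto intro: mult_pos_pos)
    qed
    also have "\<dots> \<le> 272 * \<alpha>^2 * V^2 * C / ((1 - \<alpha>)^2 * real B)"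
      using C0 B0 assms(10) by (intro divide_right_mono mult_right_mono) auto
    finally show ?thesis .
  qed
  have a3: "c3 * \<delta> \<le> 2 * V^2 / ((1 - \<alpha>)^2 * real K * real B)"
  proof -
    have "c3 * \<delta> \<le> 49 * V^2 * (1 / (25 * real K * real B))" unfolding c3_def using assms(16) by (intro mult_left_mono) auto
    also have "\<dots> \<le> 2 * V^2 / (real K * real B)" using K0 B0 by (simp add: field_simps)
    also have "\<dots> \<le> 2 * V^2 / ((1 - \<alpha>)^2 * real K * real B)"
    proof -
      have "(1-\<alpha>)^2 \<le> 1" using assms(9,10) by (simp add: power_le_one)
      moreover have "0 < (1-\<alpha>)^2" using assms(10) by simp
      ultimately show ?thesis using K0 B0 by (intro divide_left_mono mult_right_mono) (auto intro: mult_pos_pos)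
    qed
    finally show ?thesis .
  qed
  have "(\<integral>w. (norm (mu w - g))^2 \<partial>M) \<le> 4 * V^2 / ((1 - \<alpha>)^2 * real K * real B) + 272 * \<alpha>^2 * V^2 * C / ((1 - \<alpha>)^2 * real B)"
  proof -
    have "4 * V^2 / ((1 - \<alpha>)^2 * real K * real B) = 2 * V^2 / ((1 - \<alpha>)^2 * real K * real B) + 2 * V^2 / ((1 - \<alpha>)^2 * real K * real B)"
      by (simp add: add_divide_distrib[symmetric])
    moreover have "c1 * (real (card (Hon \<times> {..<B})) * V^2) + c2 + c3 * \<delta> \<le>
       2 * V^2 / ((1 - \<alpha>)^2 * real K * real B) + 272 * \<alpha>^2 * V^2 * C / ((1 - \<alpha>)^2 * real B) + 2 * V^2 / ((1 - \<alpha>)^2 * real K * real B)"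
      by (intro add_mono a1 a2 a3)
    ultimately show ?thesis using main by (simp add: algebra_simps)
  qed
  then show ?thesis unfolding M_def g_def .
qed

end
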